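(* Let $\mathcal A$ be a Von Neumann algebra in $\mathcal L(\mathcal H)$ and $U:\mathcal H\to\bigoplus_i(\mathcal H_L^i\otimes\mathcal H_R^i)$ a representation unitary for $\mathcal A$. Then the map $\chi_U:\mathcal H\to(\bigoplus_i\mathcal H_L^i)\otimes(\bigoplus_i\mathcal H_R^i)$, $x\mapsto Ux$ (followed by the natural inclusion $\bigoplus_i(\mathcal H_L^i\otimes\mathcal H_R^i)\hookrightarrow(\bigoplus_i\mathcal H_L^i)\otimes(\bigoplus_i\mathcal H_R^i)$), is a splitting map such that $\mathrm{stloc}_L(\chi_U)=\mathrm{loc}_L(\chi_U)=\mathcal A$ and $\mathrm{stloc}_R(\chi_U)=\mathrm{loc}_R(\chi_U)=\mathcal A'$.
   Context: All Hilbert spaces are finite-dimensional and complex. A Von Neumann algebra in $\mathcal L(\mathcal H)$ is a $*$-subalgebra closed under adjoint containing $\mathbb 1_{\mathcal H}$; $\mathcal A'$ is its commutant in $\mathcal L(\mathcal H)$. A representation unitary for $\mathcal A$ is a unitary $U:\mathcal H\to\bigoplus_i(\mathcal H_L^i\otimes\mathcal H_R^i)$ with $U\mathcal AU^\dagger=\bigoplus_i\mathcal L(\mathcal H_L^i)\otimes\mathbb 1_{\mathcal H_R^i}$. A splitting map on $\mathcal H$ is an isometry $\chi:\mathcal H\to\mathcal H_L^\chi\otimes\mathcal H_R^\chi$. $A\in\mathcal L(\mathcal H)$ is left $\chi$-local if $A=\chi^\dagger(\tilde A\otimes\mathbb 1)\chi$ for some $\tilde A\in\mathcal L(\mathcal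 H_L^\chi)$, and strictly left $\chi$-local if there is $\tilde A\in\mathcal L(\mathcal H_L^\chi)$ with $A\chi^\dagger=\chi^\dagger(\tilde A\otimes\mathbb 1)$ and $\chi A=(\tilde A\otimes\mathbb 1)\chi$; the sets are $\mathrm{loc}_L(\chi)$, $\mathrm{stloc}_L(\chi)$. The right versions $\mathrm{loc}_R(\chi)$, $\mathrm{stloc}_R(\chi)$ are defined in the same way with $\mathbb 1\otimes\tilde A$ for $\tilde A\in\mathcal L(\mathcal H_R^\chi)$. *)

theory Defs
  imports Complex_Main "Jordan_Normal_Form.Matrix"
begin

text \<open>Finite-dimensional Hilbert spaces are modelled as \<open>\<complex>^n\<close> with the standard
inner product; operators are complex matrices of the corresponding size.\<close>

definition adj :: "complex mat \<Rightarrow> complex mat" where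
  "adj A = mat (dim_col A) (dim_row A) (\<lambda>(i,j). cnj (A $$ (j,i)))"

text \<open>Kronecker (tensor) product; basis vector (a,b) of the product has index a * dim2 + b.\<close>
definition kron :: "complex mat \<Rightarrow> complex mat \<Rightarrow> complex mat" where
  "kron A B = mat (dim_row A * dim_row B) (dim_col A * dim_col B)
     (\<lambda>(r,c). A $$ (r div dim_row B, c div dim_col B) * B $$ (r mod dim_row B, c mod dim_col B))"

definition msum :: "nat \<Rightarrow> nat \<Rightarrow> ('i \<Rightarrow> complex mat) \<Rightarrow> 'i set \<Rightarrow> complex mat" where
  "msum nr nc f I = mat nr nc (\<lambda>(r,c). \<Sum>i\<in>I. f i $$ (r,c))"

definition vN_algebra :: "nat \<Rightarrow> complex mat set \<Rightarrow> bool" where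
  "vN_algebra n \<A> \<longleftrightarrow> \<A> \<subseteq> carrier_mat n n \<and> 1\<^sub>m n \<in> \<A> \<and>
     (\<forall>A\<in>\<A>. \<forall>B\<in>\<A>. A + B \<in> \<A> \<and> A * B \<in> \<A>) \<and>
     (\<forall>c::complex. \<forall>A\<in>\<A>. c \<cdot>\<^sub>m A \<in> \<A>) \<and>
     (\<forall>A\<in>\<A>. adj A \<in> \<A>)"

definition commutant :: "nat \<Rightarrow> complex mat set \<Rightarrow> complex mat set" where
  "commutant n \<A> = {B \<in> carrier_mat n n. \<forall>A\<in>\<A>. A * B = B * A}"

text \<open>Direct sums: summands indexed by i < k with dimensions d i; summand i occupies
the indices off d i, ..., off d i + d i - 1.\<close>
definition off :: "(nat \<Rightarrow> nat) \<Rightarrow> nat \<Rightarrow> nat" where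
  "off d i = (\<Sum>j<i. d j)"

definition incl :: "nat \<Rightarrow> (nat \<Rightarrow> nat) \<Rightarrow> nat \<Rightarrow> complex mat" where
  "incl N d i = mat N (d i) (\<lambda>(r,c). if r = off d i + c then 1 else 0)"

definition blockdiag :: "nat \<Rightarrow> (nat \<Rightarrow> nat) \<Rightarrow> (nat \<Rightarrow> complex mat) \<Rightarrow> complex mat" where
  "blockdiag k d X = (let N = (\<Sum>i<k. d i) in
     msum N N (\<lambda>i. incl N d i * X i * adj (incl N d i)) {..<k})"

definition rep_unitary ::
  "nat \<Rightarrow> complex mat set \<Rightarrow> nat \<Rightarrow> (nat \<Rightarrow> nat) \<Rightarrow> (nat \<Rightarrow> nat) \<Rightarrow> complex mat \<Rightarrow> bool" where
  "rep_unitary n \<A> k dL dR U \<longleftrightarrow>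
     (let N = (\<Sum>i<k. dL i * dR i) in
       U \<in> carrier_mat N n \<and> adj U * U = 1\<^sub>m n \<and> U * adj U = 1\<^sub>m N \<and>
       (\<lambda>A. U * A * adj U) ` \<A> =
         {blockdiag k (\<lambda>i. dL i * dR i) (\<lambda>i. kron (T i) (1\<^sub>m (dR i))) | T.
            \<forall>i<k. T i \<in> carrier_mat (dL i) (dL i)})"

definition splitting_map :: "nat \<Rightarrow> nat \<Rightarrow> nat \<Rightarrow> complex mat \<Rightarrow> bool" where
  "splitting_map n nL nR \<chi> \<longleftrightarrow> \<chi> \<in> carrier_mat (nL * nR) n \<and> adj \<chi> * \<chi> = 1\<^sub>m n"

definition loc_L :: "nat \<Rightarrow> nat \<Rightarrow> nat \<Rightarrow> complex mat \<Rightarrow> complex mat set" where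
  "loc_L n nL nR \<chi> = {A \<in> carrier_mat n n. \<exists>T \<in> carrier_mat nL nL.
      A = adj \<chi> * kron T (1\<^sub>m nR) * \<chi>}"

definition stloc_L :: "nat \<Rightarrow> nat \<Rightarrow> nat \<Rightarrow> complex mat \<Rightarrow> complex mat set" where
  "stloc_L n nL nR \<chi> = {A \<in> carrier_mat n n. \<exists>T \<in> carrier_mat nL nL.
      A * adj \<chi> = adj \<chi> * kron T (1\<^sub>m nR) \<and> \<chi> * A = kron T (1\<^sub>m nR) * \<chi>}"

definition loc_R :: "nat \<Rightarrow> nat \<Rightarrow> nat \<Rightarrow> complex mat \<Rightarrow> complex mat set" where
  "loc_R n nL nR \<chi> = {A \<in> carrier_mat n n. \<exists>T \<in> carrier_mat nR nR.
      A = adj \<chi> * kron (1\<^sub>m nL) T * \<chi>}"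

definition stloc_R :: "nat \<Rightarrow> nat \<Rightarrow> nat \<Rightarrow> complex mat \<Rightarrow> complex mat set" where
  "stloc_R n nL nR \<chi> = {A \<in> carrier_mat n n. \<exists>T \<in> carrier_mat nR nR.
      A * adj \<chi> = adj \<chi> * kron (1\<^sub>m nL) T \<and> \<chi> * A = kron (1\<^sub>m nL) T * \<chi>}"

text \<open>Natural inclusion \<Oplus>_i (H_L^i \<otimes> H_R^i) \<hookrightarrow> (\<Oplus>_i H_L^i) \<otimes> (\<Oplus>_i H_R^i).\<close>
definition split_incl :: "nat \<Rightarrow> (nat \<Rightarrow> nat) \<Rightarrow> (nat \<Rightarrow> nat) \<Rightarrow> complex mat" where
  "split_incl k dL dR = (let DL = (\<Sum>i<k. dL i); DR = (\<Sum>i<k. dR i);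
      N = (\<Sum>i<k. dL i * dR i) in
     msum (DL * DR) N (\<lambda>i. kron (incl DL dL i) (incl DR dR i) * adj (incl N (\<lambda>j. dL j * dR j) i)) {..<k})"

definition chi_U :: "nat \<Rightarrow> (nat \<Rightarrow> nat) \<Rightarrow> (nat \<Rightarrow> nat) \<Rightarrow> complex mat \<Rightarrow> complex mat" where
  "chi_U k dL dR U = split_incl k dL dR * U"

end

theory Submission
  imports Defs
begin
lemma adj_mult: "A \<in> carrier_mat m l \<Longrightarrow> B \<in> carrier_mat l n \<Longrightarrow> adj (A * B) = adj B * adj A"
  by (rule eq_matI) (auto simp: adj_def index_mult_mat scalar_prod_def mult.commute intro!: sum.cong)

lemma adj_carrier[simp]: "A \<in> carrier_mat m n \<Longrightarrow> adj A \<in> carrier_mat n m"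
  by (auto simp: adj_def)
lemma adj_index[simp]: "i < dim_col A \<Longrightarrow> j < dim_row A \<Longrightarrow> adj A $$ (i,j) = cnj (A $$ (j,i))"
  by (simp add: adj_def)
lemma adj_dims[simp]: "dim_row (adj A) = dim_col A" "dim_col (adj A) = dim_row A"
  by (auto simp: adj_def)

lemma off_Suc: "off d (Suc i) = off d i + d i" by (simp add: off_def)
lemma off_mono_lt: "i < j \<Longrightarrow> off d i + d i \<le> off d j"
proof (induction j)
  case 0 then show ?case by simp
next
  case (Suc j) then show ?case by (cases "i = j") (auto simp: off_Suc)
qed
lemma off_uniq: "off d i + c = off d j + c' \<Longrightarrow> c < d i \<Longrightarrow> c' < d j \<Longrightarrow> i = j \<and> c = c'"
  by (metis add_less_cancel_left le_add1 linorder_neqE_nat not_less off_mono_lt order_trans add_le_cancel_left)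
lemma off_bound: "i < k \<Longrightarrow> c < d i \<Longrightarrow> off d i + c < off d k"
  using off_mono_lt[of i k d] by simp
lemma off_decomp: "p < off d k \<Longrightarrow> \<exists>i<k. \<exists>c<d i. p = off d i + c"
proof (induction k)
  case 0 then show ?case by (simp add: off_def)
next
  case (Suc k)
  show ?case
  proof (cases "p < off d k")
    case True then show ?thesis using Suc.IH by (meson less_SucI)
  next
    case False then show ?thesis using Suc.prems
      by (intro exI[of _ k]) (auto simp: off_Suc intro!: exI[of _ "p - off d k"])
  qed
qed

lemma sum_delta_mult: "(\<Sum>t\<in>{0..<l::nat}. f t * (if t = e then 1 else 0)) = (if e < l then f e else (0::complex))"
proof -
  have "(\<Sum>t\<in>{0..<l}. f t * (if t = e then 1 else 0)) = (\<Sum>t\<in>{0..<l}. if t = e then f t else 0)"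
    by (rule sum.cong) auto
  also have "\<dots> = (if e \<in> {0..<l} then f e else 0)" by (subst sum.delta) auto
  finally show ?thesis by simp
qed
lemma sum_delta_mult2: "(\<Sum>t\<in>{0..<l::nat}. (if t = e then 1 else 0) * f t) = (if e < l then f e else (0::complex))"
  using sum_delta_mult[of f e l] by (simp add: mult.commute)

lemma mult_col_delta:
  fixes A D :: "complex mat"
  assumes "A \<in> carrier_mat m l" "D \<in> carrier_mat l n" "i < m" "j < n" "e < l"
    "\<And>t. t < l \<Longrightarrow> D $$ (t,j) = (if t = e then 1 else 0)"
  shows "(A * D) $$ (i,j) = A $$ (i,e)"
proof -
  have "(A * D) $$ (i,j) = (\<Sum>t\<in>{0..<l}. A $$ (i,t) * (if t = e then 1 else 0))"
    using assms by (auto simp: index_mult_mat scalar_prod_def intro!: sum.cong)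
  then show ?thesis using assms(5) by (simp only: sum_delta_mult) simp
qed
lemma mult_col_zero:
  assumes "A \<in> carrier_mat m l" "D \<in> carrier_mat l n" "i < m" "j < n"
    "\<And>t. t < l \<Longrightarrow> D $$ (t,j) = 0"
  shows "(A * D) $$ (i,j) = 0"
  using assms by (auto simp: index_mult_mat scalar_prod_def intro!: sum.neutral)
lemma mult_row_delta:
  fixes A D :: "complex mat"
  assumes "D \<in> carrier_mat m l" "A \<in> carrier_mat l n" "i < m" "j < n" "e < l"
    "\<And>t. t < l \<Longrightarrow> D $$ (i,t) = (if t = e then 1 else 0)"
  shows "(D * A) $$ (i,j) = A $$ (e,j)"
proof -
  have "(D * A) $$ (i,j) = (\<Sum>t\<in>{0..<l}. (if t = e then 1 else 0) * A $$ (t,j))"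
    using assms by (auto simp: index_mult_mat scalar_prod_def intro!: sum.cong)
  then show ?thesis using assms(5) by (simp only: sum_delta_mult2) simp
qed
lemma mult_row_zero:
  assumes "D \<in> carrier_mat m l" "A \<in> carrier_mat l n" "i < m" "j < n"
    "\<And>t. t < l \<Longrightarrow> D $$ (i,t) = 0"
  shows "(D * A) $$ (i,j) = 0"
  using assms by (auto simp: index_mult_mat scalar_prod_def intro!: sum.neutral)

lemma incl_carrier[simp]: "incl N d i \<in> carrier_mat N (d i)" by (simp add: incl_def)

lemma incl_left: assumes "X \<in> carrier_mat (d i) m" "p < N" "c < m"
  shows "(incl N d i * X) $$ (p,c) = (if off d i \<le> p \<and> p < off d i + d i then X $$ (p - off d i, c) else 0)"
proof (cases "off d i \<le> p \<and> p < off d i + d i")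
  case True
  then show ?thesis using assms
    by (subst mult_row_delta[where e = "p - off d i"]) (auto simp: incl_def)
next
  case False
  then show ?thesis using assms
    by (subst mult_row_zero) (auto simp: incl_def)
qed

lemma incl_right: assumes "X \<in> carrier_mat m (d i)" "p < N" "c < m"
  shows "(X * adj (incl N d i)) $$ (c,p) = (if off d i \<le> p \<and> p < off d i + d i then X $$ (c, p - off d i) else 0)"
proof (cases "off d i \<le> p \<and> p < off d i + d i")
  case True
  then show ?thesis using assms
    by (subst mult_col_delta[where e = "p - off d i"]) (auto simp: incl_def adj_def)
next
  case False
  then show ?thesis using assms
    by (subst mult_col_zero) (auto simp: incl_def adj_def)
qed

lemma blockdiag_carrier[simp]: "blockdiag k d Z \<in> carrier_mat (off d k) (off d k)"
  by (simp add: blockdiag_def msum_def off_def Let_def)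

lemma blockdiag_dims[simp]: "dim_row (blockdiag k d Z) = off d k" "dim_col (blockdiag k d Z) = off d k"
  using blockdiag_carrier[of k d Z] unfolding carrier_mat_def by auto

lemma blockdiag_entry:
  assumes Z: "\<And>i. i < k \<Longrightarrow> Z i \<in> carrier_mat (d i) (d i)"
    and ij: "i < k" "j < k" "c < d i" "c' < d j"
  shows "blockdiag k d Z $$ (off d i + c, off d j + c') = (if i = j then Z i $$ (c, c') else 0)"
proof -
  let ?N = "off d k"
  have b: "off d i + c < ?N" "off d j + c' < ?N" using ij off_bound by auto
  have "blockdiag k d Z $$ (off d i + c, off d j + c') =
     (\<Sum>l<k. (incl ?N d l * Z l * adj (incl ?N d l)) $$ (off d i + c, off d j + c'))"
    using b by (simp add: blockdiag_def msum_def off_def Let_def)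
  also have "\<dots> = (\<Sum>l<k. if l = i then (if i = j then Z i $$ (c, c') else 0) else 0)"
  proof (rule sum.cong[OF refl])
    fix l assume l: "l \<in> {..<k}"
    have Zl: "Z l \<in> carrier_mat (d l) (d l)" using Z l by auto
    have e1: "(incl ?N d l * Z l * adj (incl ?N d l)) $$ (off d i + c, off d j + c') =
      (if off d l \<le> off d j + c' \<and> off d j + c' < off d l + d l then (incl ?N d l * Z l) $$ (off d i + c, off d j + c' - off d l) else 0)"
      by (rule incl_right[OF _ b(2) b(1)]) (use mult_carrier_mat[OF incl_carrier[of "off d k" d l] Zl] in auto)
    show "(incl ?N d l * Z l * adj (incl ?N d l)) $$ (off d i + c, off d j + c') = (if l = i then (if i = j then Z i $$ (c, c') else 0) else 0)"
    proof (cases "l = i \<and> l = j")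
      case True
      then have li: "l = i" and lj: "j = i" by auto
      have "(incl ?N d l * Z l) $$ (off d i + c, c') = Z i $$ (c, c')"
        using incl_left[where d=d and i=l and X="Z l", OF Zl b(1), of c'] ij li lj by simp
      then show ?thesis unfolding e1 using ij li lj by simp
    next
      case False
      show ?thesis
      proof (cases "l = i")
        case True
        then have "l \<noteq> j" using False by auto
        then have "\<not> (off d l \<le> off d j + c' \<and> off d j + c' < off d l + d l)"
          using off_uniq[of d l "off d j + c' - off d l" j c'] ij by (auto simp: less_diff_conv2 add.commute)
        then show ?thesis unfolding e1 using True \<open>l \<noteq> j\<close> by auto
      next
        case False
        then have nr: "\<not> (off d l \<le> off d i + c \<and> off d i + c < off d l + d l)"
          using off_uniq[of d l "off d i + c - off d l" i c] ij by (auto simp: less_diff_conv2 add.commute)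
        have "(incl ?N d l * Z l) $$ (off d i + c, x) = 0" if "x < d l" for x
          using incl_left[where d=d and i=l and X="Z l", OF Zl b(1), of x] nr that by simp
        then show ?thesis unfolding e1 using False by (auto simp: less_diff_conv2 add.commute)
      qed
    qed
  qed
  also have "\<dots> = (if i = j then Z i $$ (c, c') else 0)" using ij by simp
  finally show ?thesis .
qed


definition idx :: "(nat \<Rightarrow> nat) \<Rightarrow> (nat \<Rightarrow> nat) \<Rightarrow> nat \<Rightarrow> nat \<Rightarrow> nat \<Rightarrow> nat" where
  "idx dL dR i a r = off (\<lambda>j. dL j * dR j) i + (a * dR i + r)"
definition sg :: "nat \<Rightarrow> (nat \<Rightarrow> nat) \<Rightarrow> (nat \<Rightarrow> nat) \<Rightarrow> nat \<Rightarrow> nat \<Rightarrow> nat \<Rightarrow> nat" where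
  "sg k dL dR i a r = (off dL i + a) * off dR k + (off dR i + r)"

lemma ar_bound: "a < (x::nat) \<Longrightarrow> r < y \<Longrightarrow> a * y + r < x * y"
proof -
  assume "a < x" "r < y"
  then have "a * y + r < a * y + y" by simp
  also have "\<dots> = Suc a * y" by simp
  also have "\<dots> \<le> x * y" using \<open>a < x\<close> by (intro mult_le_mono1) simp
  finally show ?thesis .
qed

lemma ar_uniq: "a * y + r = b * y + r' \<Longrightarrow> r < (y::nat) \<Longrightarrow> r' < y \<Longrightarrow> a = b \<and> r = r'"
proof -
  assume h: "a * y + r = b * y + r'" "r < y" "r' < y"
  then have "(a * y + r) mod y = (b * y + r') mod y" by simp
  then have "r = r'" using h by (metis mod_mult_self3 mod_less)
  have "y > 0" using h by simp
  then have "(a * y + r) div y = a" "(b * y + r') div y = b" using h(2,3) by simp_all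
  then have "a = b" using h(1) by metis
  with \<open>r = r'\<close> show ?thesis by simp
qed

lemma idx_bound: "i < k \<Longrightarrow> a < dL i \<Longrightarrow> r < dR i \<Longrightarrow> idx dL dR i a r < off (\<lambda>j. dL j * dR j) k"
  unfolding idx_def by (rule off_bound) (auto intro: ar_bound)

lemma idx_uniq: "idx dL dR i a r = idx dL dR j b r' \<Longrightarrow> a < dL i \<Longrightarrow> r < dR i \<Longrightarrow> b < dL j \<Longrightarrow> r' < dR j
  \<Longrightarrow> i = j \<and> a = b \<and> r = r'"
proof -
  assume h: "idx dL dR i a r = idx dL dR j b r'" "a < dL i" "r < dR i" "b < dL j" "r' < dR j"
  then have "i = j \<and> a * dR i + r = b * dR j + r'"
    using off_uniq[of "\<lambda>j. dL j * dR j" i "a * dR i + r" j "b * dR j + r'"] ar_bound[of a "dL i" r "dR i"] ar_bound[of b "dL j" r' "dR j"]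
    unfolding idx_def by auto
  then show ?thesis using ar_uniq[of a "dR i" r b r'] h by auto
qed

lemma idx_decomp: "p < off (\<lambda>j. dL j * dR j) k \<Longrightarrow> \<exists>i<k. \<exists>a<dL i. \<exists>r<dR i. p = idx dL dR i a r"
proof -
  assume "p < off (\<lambda>j. dL j * dR j) k"
  then obtain i c where i: "i < k" "c < dL i * dR i" "p = off (\<lambda>j. dL j * dR j) i + c"
    using off_decomp by blast
  then have "dR i > 0" by (cases "dR i") auto
  then have "c = (c div dR i) * dR i + c mod dR i" "c mod dR i < dR i" "c div dR i < dL i"
    using i by (auto simp: less_mult_imp_div_less)
  then show ?thesis using i unfolding idx_def by metis
qed

lemma sg_bound: "i < k \<Longrightarrow> a < dL i \<Longrightarrow> r < dR i \<Longrightarrow> sg k dL dR i a r < off dL k * off dR k"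
  unfolding sg_def by (rule ar_bound) (auto intro: off_bound)

lemma sg_uniq: "sg k dL dR i a r = sg k dL dR j b r' \<Longrightarrow> i < k \<Longrightarrow> j < k \<Longrightarrow> a < dL i \<Longrightarrow> r < dR i \<Longrightarrow> b < dL j \<Longrightarrow> r' < dR j
  \<Longrightarrow> i = j \<and> a = b \<and> r = r'"
  unfolding sg_def using ar_uniq[of "off dL i + a" "off dR k" "off dR i + r" "off dL j + b" "off dR j + r'"]
    off_bound[of i k r dR] off_bound[of j k r' dR] off_uniq[of dL i a j b] off_uniq[of dR i r j r']
  by auto

lemma kron_carrier[simp]: "kron A B \<in> carrier_mat (dim_row A * dim_row B) (dim_col A * dim_col B)"
  by (simp add: kron_def)

lemma kron_entry: "A \<in> carrier_mat m1 n1 \<Longrightarrow> B \<in> carrier_mat m2 n2 \<Longrightarrow> a < m1 \<Longrightarrow> b < n1 \<Longrightarrow> r < m2 \<Longrightarrow> r' < n2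
  \<Longrightarrow> kron A B $$ (a * m2 + r, b * n2 + r') = A $$ (a,b) * B $$ (r,r')"
  by (simp add: kron_def ar_bound)

lemma blockdiag_kron_entry:
  assumes X: "\<And>i. i < k \<Longrightarrow> X i \<in> carrier_mat (dL i) (dL i)"
    and Y: "\<And>i. i < k \<Longrightarrow> Y i \<in> carrier_mat (dR i) (dR i)"
    and ij: "i < k" "j < k" "a < dL i" "r < dR i" "b < dL j" "r' < dR j"
  shows "blockdiag k (\<lambda>j. dL j * dR j) (\<lambda>i. kron (X i) (Y i)) $$ (idx dL dR i a r, idx dL dR j b r') =
     (if i = j then X i $$ (a,b) * Y i $$ (r,r') else 0)"
proof -
  have "blockdiag k (\<lambda>j. dL j * dR j) (\<lambda>i. kron (X i) (Y i)) $$ (idx dL dR i a r, idx dL dR j b r') =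
     (if i = j then kron (X i) (Y i) $$ (a * dR i + r, b * dR j + r') else 0)"
    unfolding idx_def
  proof (rule blockdiag_entry)
    show "kron (X i) (Y i) \<in> carrier_mat (dL i * dR i) (dL i * dR i)" if "i < k" for i
      using kron_carrier[of "X i" "Y i"] X[OF that] Y[OF that] by auto
  qed (use ij in \<open>auto intro: ar_bound\<close>)
  then show ?thesis using kron_entry[OF X Y] ij by auto
qed


lemma S_carrier[simp]: "split_incl k dL dR \<in> carrier_mat (off dL k * off dR k) (off (\<lambda>j. dL j * dR j) k)"
  by (simp add: split_incl_def msum_def off_def Let_def)

lemma kron_incl_entry:
  assumes q: "q < off dL k * off dR k" and i: "i < k" "a < dL i" "r < dR i"
  shows "kron (incl (off dL k) dL i) (incl (off dR k) dR i) $$ (q, a * dR i + r) = (if q = sg k dL dR i a r then 1 else 0)"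
proof -
  let ?DL = "off dL k" and ?DR = "off dR k"
  have rb: "off dR i + r < ?DR" using i off_bound by auto
  then have DR0: "?DR > 0" by simp
  have qd: "q div ?DR < ?DL" using q by (simp add: less_mult_imp_div_less)
  have qm: "q mod ?DR < ?DR" using DR0 by simp
  have c: "a * dR i + r < dL i * dR i" using i ar_bound by auto
  have "kron (incl ?DL dL i) (incl ?DR dR i) $$ (q, a * dR i + r) =
     incl ?DL dL i $$ (q div ?DR, a) * incl ?DR dR i $$ (q mod ?DR, r)"
    using q c i by (simp add: kron_def incl_def)
  also have "\<dots> = (if q div ?DR = off dL i + a then 1 else 0) * (if q mod ?DR = off dR i + r then 1 else 0)"
    using qd qm i by (simp add: incl_def)
  also have "\<dots> = (if q = sg k dL dR i a r then 1 else 0)"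
  proof -
    have qq: "q = (q div ?DR) * ?DR + q mod ?DR" by (metis div_mult_mod_eq)
    have "(q div ?DR = off dL i + a \<and> q mod ?DR = off dR i + r) = (q = sg k dL dR i a r)"
      unfolding sg_def using ar_uniq[of "q div ?DR" ?DR "q mod ?DR" "off dL i + a" "off dR i + r"] qm rb qq
      by metis
    then show ?thesis by auto
  qed
  finally show ?thesis .
qed

lemma S_col:
  assumes q: "q < off dL k * off dR k" and i: "i < k" "a < dL i" "r < dR i"
  shows "split_incl k dL dR $$ (q, idx dL dR i a r) = (if q = sg k dL dR i a r then 1 else 0)"
proof -
  let ?d = "\<lambda>j. dL j * dR j"
  let ?N = "off ?d k" and ?DL = "off dL k" and ?DR = "off dR k"
  let ?M = "\<lambda>j. kron (incl ?DL dL j) (incl ?DR dR j)"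
  have p: "idx dL dR i a r < ?N" using idx_bound[where k=k and dL=dL and dR=dR, OF i] .
  have c: "a * dR i + r < dL i * dR i" using i ar_bound by auto
  have "split_incl k dL dR $$ (q, idx dL dR i a r) = (\<Sum>j<k. (?M j * adj (incl ?N ?d j)) $$ (q, idx dL dR i a r))"
    using q p by (simp add: split_incl_def msum_def off_def[symmetric] Let_def)
  also have "\<dots> = (\<Sum>j<k. if j = i then ?M i $$ (q, a * dR i + r) else 0)"
  proof (rule sum.cong[OF refl])
    fix j assume j: "j \<in> {..<k}"
    have Mc: "?M j \<in> carrier_mat (?DL * ?DR) (?d j)"
      using kron_carrier[of "incl ?DL dL j" "incl ?DR dR j"] by (simp add: incl_def)
    have e: "(?M j * adj (incl ?N ?d j)) $$ (q, idx dL dR i a r) =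
      (if off ?d j \<le> idx dL dR i a r \<and> idx dL dR i a r < off ?d j + ?d j then ?M j $$ (q, idx dL dR i a r - off ?d j) else 0)"
      by (rule incl_right[where d = ?d and i = j and X = "?M j", OF Mc p q])
    show "(?M j * adj (incl ?N ?d j)) $$ (q, idx dL dR i a r) = (if j = i then ?M i $$ (q, a * dR i + r) else 0)"
    proof (cases "j = i")
      case True then show ?thesis unfolding e using c by (simp add: idx_def)
    next
      case False
      then have "\<not> (off ?d j \<le> idx dL dR i a r \<and> idx dL dR i a r < off ?d j + ?d j)"
        using off_uniq[of ?d j "idx dL dR i a r - off ?d j" i "a * dR i + r"] c
        unfolding idx_def by (auto simp: less_diff_conv2 add.commute)
      then show ?thesis unfolding e using False by auto
    qed
  qed
  also have "\<dots> = ?M i $$ (q, a * dR i + r)" using i by simp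
  also have "\<dots> = (if q = sg k dL dR i a r then 1 else 0)" by (rule kron_incl_entry[OF q i])
  finally show ?thesis .
qed


lemma S_dims[simp]: "dim_row (split_incl k dL dR) = off dL k * off dR k" "dim_col (split_incl k dL dR) = off (\<lambda>j. dL j * dR j) k"
  using S_carrier[of k dL dR] unfolding carrier_mat_def by auto

lemma S_row:
  assumes i: "i < k" "a < dL i" "r < dR i" and p: "p < off (\<lambda>j. dL j * dR j) k"
  shows "split_incl k dL dR $$ (sg k dL dR i a r, p) = (if p = idx dL dR i a r then 1 else 0)"
proof -
  obtain j b r' where j: "j < k" "b < dL j" "r' < dR j" and pj: "p = idx dL dR j b r'"
    using idx_decomp[OF p] by blast
  have "split_incl k dL dR $$ (sg k dL dR i a r, p) = (if sg k dL dR i a r = sg k dL dR j b r' then 1 else 0)"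
    unfolding pj by (rule S_col[where k=k and dL=dL and dR=dR, OF sg_bound[where k=k and dL=dL and dR=dR, OF i] j])
  moreover have "(sg k dL dR i a r = sg k dL dR j b r') = (idx dL dR j b r' = idx dL dR i a r)"
    using sg_uniq[of k dL dR i a r j b r'] idx_uniq[of dL dR j b r' i a r] i j by auto
  ultimately show ?thesis using pj by simp
qed

lemma S_row_zero:
  assumes q: "q < off dL k * off dR k" and nq: "\<not> (\<exists>i<k. \<exists>a<dL i. \<exists>r<dR i. q = sg k dL dR i a r)"
    and p: "p < off (\<lambda>j. dL j * dR j) k"
  shows "split_incl k dL dR $$ (q, p) = 0"
proof -
  obtain j b r' where j: "j < k" "b < dL j" "r' < dR j" and pj: "p = idx dL dR j b r'"
    using idx_decomp[OF p] by blast
  show ?thesis unfolding pj using S_col[where k=k and dL=dL and dR=dR, OF q j] nq j by auto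
qed

lemma SS: "adj (split_incl k dL dR) * split_incl k dL dR = 1\<^sub>m (off (\<lambda>j. dL j * dR j) k)"
proof (rule eq_matI)
  let ?S = "split_incl k dL dR" and ?N = "off (\<lambda>j. dL j * dR j) k"
  fix p p' assume p: "p < dim_row (1\<^sub>m ?N)" and p': "p' < dim_col (1\<^sub>m ?N)"
  obtain j b r' where j: "j < k" "b < dL j" "r' < dR j" and pj: "p' = idx dL dR j b r'"
    using idx_decomp[of p' dL dR k] p' by auto
  have "(adj ?S * ?S) $$ (p, p') = adj ?S $$ (p, sg k dL dR j b r')"
    unfolding pj
    by (rule mult_col_delta[OF adj_carrier[OF S_carrier] S_carrier])
       (use p p' pj S_col[where k=k and dL=dL and dR=dR, OF _ j] sg_bound[where k=k and dL=dL and dR=dR, OF j] in auto)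
  also have "\<dots> = (if p = p' then 1 else 0)"
    using p S_row[where k=k and dL=dL and dR=dR, OF j, of p] sg_bound[where k=k and dL=dL and dR=dR, OF j] pj by auto
  finally show "(adj ?S * ?S) $$ (p, p') = 1\<^sub>m ?N $$ (p, p')" using p p' by simp
qed auto

lemma SMS:
  assumes M: "M \<in> carrier_mat (off dL k * off dR k) (off dL k * off dR k)"
    and i: "i < k" "a < dL i" "r < dR i" and j: "j < k" "b < dL j" "r' < dR j"
  shows "(adj (split_incl k dL dR) * M * split_incl k dL dR) $$ (idx dL dR i a r, idx dL dR j b r')
     = M $$ (sg k dL dR i a r, sg k dL dR j b r')"
proof -
  let ?S = "split_incl k dL dR" and ?N = "off (\<lambda>j. dL j * dR j) k"
  have pi: "idx dL dR i a r < ?N" and pj: "idx dL dR j b r' < ?N"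
    using idx_bound[where k=k and dL=dL and dR=dR, OF i] idx_bound[where k=k and dL=dL and dR=dR, OF j] by auto
  have "(adj ?S * M * ?S) $$ (idx dL dR i a r, idx dL dR j b r') = (adj ?S * M) $$ (idx dL dR i a r, sg k dL dR j b r')"
    by (rule mult_col_delta[OF mult_carrier_mat[OF adj_carrier[OF S_carrier] M] S_carrier])
       (use pi pj S_col[where k=k and dL=dL and dR=dR, OF _ j] sg_bound[where k=k and dL=dL and dR=dR, OF j] in auto)
  also have "\<dots> = M $$ (sg k dL dR i a r, sg k dL dR j b r')"
    by (rule mult_row_delta[OF adj_carrier[OF S_carrier] M])
       (use pi pj S_col[where k=k and dL=dL and dR=dR, OF _ i] sg_bound[where k=k and dL=dL and dR=dR, OF i] sg_bound[where k=k and dL=dL and dR=dR, OF j] in auto)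
  finally show ?thesis .
qed

definition compat :: "nat \<Rightarrow> (nat \<Rightarrow> nat) \<Rightarrow> (nat \<Rightarrow> nat) \<Rightarrow> complex mat \<Rightarrow> bool" where
  "compat k dL dR K \<longleftrightarrow> (\<forall>q < off dL k * off dR k. \<forall>i<k. \<forall>a<dL i. \<forall>r<dR i.
     (K $$ (q, sg k dL dR i a r) \<noteq> 0 \<or> K $$ (sg k dL dR i a r, q) \<noteq> 0) \<longrightarrow>
     (\<exists>j<k. \<exists>b<dL j. \<exists>r'<dR j. q = sg k dL dR j b r'))"

lemma comm_right:
  assumes K: "K \<in> carrier_mat (off dL k * off dR k) (off dL k * off dR k)" and c: "compat k dL dR K"
  shows "K * split_incl k dL dR = split_incl k dL dR * (adj (split_incl k dL dR) * K * split_incl k dL dR)"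
proof (rule eq_matI)
  let ?S = "split_incl k dL dR" and ?N = "off (\<lambda>j. dL j * dR j) k"
  have B: "adj ?S * K * ?S \<in> carrier_mat ?N ?N"
    using mult_carrier_mat[OF mult_carrier_mat[OF adj_carrier[OF S_carrier] K] S_carrier] .
  fix q p assume q: "q < dim_row (?S * (adj ?S * K * ?S))" and p: "p < dim_col (?S * (adj ?S * K * ?S))"
  then have q: "q < off dL k * off dR k" and p: "p < ?N" using B by auto
  obtain i a r where i: "i < k" "a < dL i" "r < dR i" and pi: "p = idx dL dR i a r"
    using idx_decomp[OF p] by blast
  have L: "(K * ?S) $$ (q, p) = K $$ (q, sg k dL dR i a r)"
    unfolding pi by (rule mult_col_delta[OF K S_carrier]) (use q p pi S_col[where k=k and dL=dL and dR=dR, OF _ i] sg_bound[where k=k and dL=dL and dR=dR, OF i] in auto)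
  show "(K * ?S) $$ (q, p) = (?S * (adj ?S * K * ?S)) $$ (q, p)"
  proof (cases "\<exists>j<k. \<exists>b<dL j. \<exists>r'<dR j. q = sg k dL dR j b r'")
    case True
    then obtain j b r' where j: "j < k" "b < dL j" "r' < dR j" and qj: "q = sg k dL dR j b r'" by blast
    have "(?S * (adj ?S * K * ?S)) $$ (q, p) = (adj ?S * K * ?S) $$ (idx dL dR j b r', p)"
      by (rule mult_row_delta[OF S_carrier B]) (use q p qj S_row[where k=k and dL=dL and dR=dR, OF j] idx_bound[where k=k and dL=dL and dR=dR, OF j] in auto)
    also have "\<dots> = K $$ (q, sg k dL dR i a r)" unfolding pi qj by (rule SMS[OF K j i])
    finally show ?thesis using L by simp
  next
    case False
    have "(?S * (adj ?S * K * ?S)) $$ (q, p) = 0"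
      by (rule mult_row_zero[OF S_carrier B]) (use q p False S_row_zero in auto)
    moreover have "K $$ (q, sg k dL dR i a r) = 0" using c False q i unfolding compat_def by blast
    ultimately show ?thesis using L by simp
  qed
qed (use K in auto)

lemma comm_left:
  assumes K: "K \<in> carrier_mat (off dL k * off dR k) (off dL k * off dR k)" and c: "compat k dL dR K"
  shows "adj (split_incl k dL dR) * K = (adj (split_incl k dL dR) * K * split_incl k dL dR) * adj (split_incl k dL dR)"
proof (rule eq_matI)
  let ?S = "split_incl k dL dR" and ?N = "off (\<lambda>j. dL j * dR j) k"
  have B: "adj ?S * K * ?S \<in> carrier_mat ?N ?N"
    using mult_carrier_mat[OF mult_carrier_mat[OF adj_carrier[OF S_carrier] K] S_carrier] .
  fix p q assume p: "p < dim_row ((adj ?S * K * ?S) * adj ?S)" and q: "q < dim_col ((adj ?S * K * ?S) * adj ?S)"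
  then have q: "q < off dL k * off dR k" and p: "p < ?N" using B by auto
  obtain i a r where i: "i < k" "a < dL i" "r < dR i" and pi: "p = idx dL dR i a r"
    using idx_decomp[OF p] by blast
  have L: "(adj ?S * K) $$ (p, q) = K $$ (sg k dL dR i a r, q)"
    unfolding pi by (rule mult_row_delta[OF adj_carrier[OF S_carrier] K]) (use q p pi S_col[where k=k and dL=dL and dR=dR, OF _ i] sg_bound[where k=k and dL=dL and dR=dR, OF i] in auto)
  show "(adj ?S * K) $$ (p, q) = ((adj ?S * K * ?S) * adj ?S) $$ (p, q)"
  proof (cases "\<exists>j<k. \<exists>b<dL j. \<exists>r'<dR j. q = sg k dL dR j b r'")
    case True
    then obtain j b r' where j: "j < k" "b < dL j" "r' < dR j" and qj: "q = sg k dL dR j b r'" by blast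
    have "((adj ?S * K * ?S) * adj ?S) $$ (p, q) = (adj ?S * K * ?S) $$ (p, idx dL dR j b r')"
      by (rule mult_col_delta[OF B adj_carrier[OF S_carrier]]) (use q p qj S_row[where k=k and dL=dL and dR=dR, OF j] idx_bound[where k=k and dL=dL and dR=dR, OF j] in auto)
    also have "\<dots> = K $$ (sg k dL dR i a r, q)" unfolding pi qj by (rule SMS[OF K i j])
    finally show ?thesis using L by simp
  next
    case False
    have "((adj ?S * K * ?S) * adj ?S) $$ (p, q) = 0"
      by (rule mult_col_zero[OF B adj_carrier[OF S_carrier]]) (use q p False S_row_zero in auto)
    moreover have "K $$ (sg k dL dR i a r, q) = 0" using c False q i unfolding compat_def by blast
    ultimately show ?thesis using L by simp
  qed
qed (use K in auto)


definition sub_blk :: "(nat \<Rightarrow> nat) \<Rightarrow> complex mat \<Rightarrow> nat \<Rightarrow> complex mat" where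
  "sub_blk d T i = mat (d i) (d i) (\<lambda>(a,b). T $$ (off d i + a, off d i + b))"

lemma sub_blk_carrier[simp]: "sub_blk d T i \<in> carrier_mat (d i) (d i)" by (simp add: sub_blk_def)

lemma sub_blockdiag:
  assumes X: "\<And>i. i < k \<Longrightarrow> X i \<in> carrier_mat (d i) (d i)" and i: "i < k"
  shows "sub_blk d (blockdiag k d X) i = X i"
  by (rule eq_matI) (use X[OF i] i in \<open>auto simp: sub_blk_def blockdiag_entry[OF X]\<close>)

lemma kronT1_entry:
  assumes T: "T \<in> carrier_mat (off dL k) (off dL k)"
    and i: "i < k" "a < dL i" "r < dR i" and j: "j < k" "b < dL j" "r' < dR j"
  shows "kron T (1\<^sub>m (off dR k)) $$ (sg k dL dR i a r, sg k dL dR j b r') =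
    (if i = j \<and> r = r' then T $$ (off dL i + a, off dL j + b) else 0)"
proof -
  have "kron T (1\<^sub>m (off dR k)) $$ (sg k dL dR i a r, sg k dL dR j b r') =
     T $$ (off dL i + a, off dL j + b) * 1\<^sub>m (off dR k) $$ (off dR i + r, off dR j + r')"
    unfolding sg_def by (rule kron_entry[OF T one_carrier_mat]) (use i j off_bound in auto)
  moreover have "(off dR i + r = off dR j + r') = (i = j \<and> r = r')" using off_uniq[of dR i r j r'] i j by auto
  ultimately show ?thesis using i j off_bound[of i k r dR] off_bound[of j k r' dR] by auto
qed

lemma kron1R_entry:
  assumes R: "R \<in> carrier_mat (off dR k) (off dR k)"
    and i: "i < k" "a < dL i" "r < dR i" and j: "j < k" "b < dL j" "r' < dR j"
  shows "kron (1\<^sub>m (off dL k)) R $$ (sg k dL dR i a r, sg k dL dR j b r') =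
    (if i = j \<and> a = b then R $$ (off dR i + r, off dR j + r') else 0)"
proof -
  have "kron (1\<^sub>m (off dL k)) R $$ (sg k dL dR i a r, sg k dL dR j b r') =
     1\<^sub>m (off dL k) $$ (off dL i + a, off dL j + b) * R $$ (off dR i + r, off dR j + r')"
    unfolding sg_def by (rule kron_entry[OF one_carrier_mat R]) (use i j off_bound in auto)
  moreover have "(off dL i + a = off dL j + b) = (i = j \<and> a = b)" using off_uniq[of dL i a j b] i j by auto
  ultimately show ?thesis using i j off_bound[of i k a dL] off_bound[of j k b dL] by auto
qed

lemma SKS_L:
  assumes T: "T \<in> carrier_mat (off dL k) (off dL k)"
  shows "adj (split_incl k dL dR) * kron T (1\<^sub>m (off dR k)) * split_incl k dL dR =
    blockdiag k (\<lambda>j. dL j * dR j) (\<lambda>i. kron (sub_blk dL T i) (1\<^sub>m (dR i)))"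
proof (rule eq_matI)
  let ?N = "off (\<lambda>j. dL j * dR j) k"
  have K: "kron T (1\<^sub>m (off dR k)) \<in> carrier_mat (off dL k * off dR k) (off dL k * off dR k)"
    using kron_carrier[of T "1\<^sub>m (off dR k)"] T by auto
  fix p p' assume "p < dim_row (blockdiag k (\<lambda>j. dL j * dR j) (\<lambda>i. kron (sub_blk dL T i) (1\<^sub>m (dR i))))"
    "p' < dim_col (blockdiag k (\<lambda>j. dL j * dR j) (\<lambda>i. kron (sub_blk dL T i) (1\<^sub>m (dR i))))"
  then have p: "p < ?N" and p': "p' < ?N" by simp_all
  obtain i a r where i: "i < k" "a < dL i" "r < dR i" and pi: "p = idx dL dR i a r"
    using idx_decomp[OF p] by blast
  obtain j b r' where j: "j < k" "b < dL j" "r' < dR j" and pj: "p' = idx dL dR j b r'"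
    using idx_decomp[OF p'] by blast
  show "(adj (split_incl k dL dR) * kron T (1\<^sub>m (off dR k)) * split_incl k dL dR) $$ (p, p') =
    blockdiag k (\<lambda>j. dL j * dR j) (\<lambda>i. kron (sub_blk dL T i) (1\<^sub>m (dR i))) $$ (p, p')"
  proof -
    have e: "blockdiag k (\<lambda>j. dL j * dR j) (\<lambda>i. kron (sub_blk dL T i) (1\<^sub>m (dR i))) $$ (idx dL dR i a r, idx dL dR j b r')
      = (if i = j then sub_blk dL T i $$ (a,b) * 1\<^sub>m (dR i) $$ (r,r') else 0)"
      by (rule blockdiag_kron_entry) (use i j in auto)
    show ?thesis unfolding pi pj SMS[OF K i j] kronT1_entry[OF T i j] e
      using i j by (auto simp: sub_blk_def)
  qed
qed simp_all

lemma SKS_R: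
  assumes R: "R \<in> carrier_mat (off dR k) (off dR k)"
  shows "adj (split_incl k dL dR) * kron (1\<^sub>m (off dL k)) R * split_incl k dL dR =
    blockdiag k (\<lambda>j. dL j * dR j) (\<lambda>i. kron (1\<^sub>m (dL i)) (sub_blk dR R i))"
proof (rule eq_matI)
  let ?N = "off (\<lambda>j. dL j * dR j) k"
  have K: "kron (1\<^sub>m (off dL k)) R \<in> carrier_mat (off dL k * off dR k) (off dL k * off dR k)"
    using kron_carrier[of "1\<^sub>m (off dL k)" R] R by auto
  fix p p' assume "p < dim_row (blockdiag k (\<lambda>j. dL j * dR j) (\<lambda>i. kron (1\<^sub>m (dL i)) (sub_blk dR R i)))"
    "p' < dim_col (blockdiag k (\<lambda>j. dL j * dR j) (\<lambda>i. kron (1\<^sub>m (dL i)) (sub_blk dR R i)))"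
  then have p: "p < ?N" and p': "p' < ?N" by simp_all
  obtain i a r where i: "i < k" "a < dL i" "r < dR i" and pi: "p = idx dL dR i a r"
    using idx_decomp[OF p] by blast
  obtain j b r' where j: "j < k" "b < dL j" "r' < dR j" and pj: "p' = idx dL dR j b r'"
    using idx_decomp[OF p'] by blast
  show "(adj (split_incl k dL dR) * kron (1\<^sub>m (off dL k)) R * split_incl k dL dR) $$ (p, p') =
    blockdiag k (\<lambda>j. dL j * dR j) (\<lambda>i. kron (1\<^sub>m (dL i)) (sub_blk dR R i)) $$ (p, p')"
  proof -
    have e: "blockdiag k (\<lambda>j. dL j * dR j) (\<lambda>i. kron (1\<^sub>m (dL i)) (sub_blk dR R i)) $$ (idx dL dR i a r, idx dL dR j b r')
      = (if i = j then 1\<^sub>m (dL i) $$ (a,b) * sub_blk dR R i $$ (r,r') else 0)"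
      by (rule blockdiag_kron_entry) (use i j in auto)
    show ?thesis unfolding pi pj SMS[OF K i j] kron1R_entry[OF R i j] e
      using i j by (auto simp: sub_blk_def)
  qed
qed simp_all


lemma q_decomp: "q < m1 * (m2::nat) \<Longrightarrow> q = (q div m2) * m2 + q mod m2 \<and> q div m2 < m1 \<and> q mod m2 < m2"
  by (metis div_mult_mod_eq less_mult_imp_div_less mod_less_divisor mult_0_right not_gr0 not_less0)

lemma compat_L:
  assumes X: "\<And>i. i < k \<Longrightarrow> X i \<in> carrier_mat (dL i) (dL i)"
  shows "compat k dL dR (kron (blockdiag k dL X) (1\<^sub>m (off dR k)))"
  unfolding compat_def
proof (intro allI impI)
  fix q i a r
  assume q: "q < off dL k * off dR k" and i: "i < k" "a < dL i" "r < dR i"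
    and nz: "kron (blockdiag k dL X) (1\<^sub>m (off dR k)) $$ (q, sg k dL dR i a r) \<noteq> 0 \<or>
       kron (blockdiag k dL X) (1\<^sub>m (off dR k)) $$ (sg k dL dR i a r, q) \<noteq> 0"
  let ?T = "blockdiag k dL X" and ?DR = "off dR k" and ?DL = "off dL k"
  define x where "x = q div ?DR"
  define y where "y = q mod ?DR"
  have qd: "q = x * ?DR + y" "x < ?DL" "y < ?DR" using q_decomp[OF q] unfolding x_def y_def by auto
  obtain j b where j: "j < k" "b < dL j" "x = off dL j + b" using off_decomp[OF qd(2)] by blast
  have ia: "off dL i + a < ?DL" "off dR i + r < ?DR" using i off_bound by auto
  have T: "?T \<in> carrier_mat ?DL ?DL" by simp
  have e1: "kron ?T (1\<^sub>m ?DR) $$ (q, sg k dL dR i a r) = ?T $$ (x, off dL i + a) * 1\<^sub>m ?DR $$ (y, off dR i + r)"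
    unfolding sg_def qd(1) by (rule kron_entry[OF T one_carrier_mat]) (use qd ia in auto)
  have e2: "kron ?T (1\<^sub>m ?DR) $$ (sg k dL dR i a r, q) = ?T $$ (off dL i + a, x) * 1\<^sub>m ?DR $$ (off dR i + r, y)"
    unfolding sg_def qd(1) by (rule kron_entry[OF T one_carrier_mat]) (use qd ia in auto)
  have b1: "?T $$ (x, off dL i + a) = (if j = i then X j $$ (b, a) else 0)"
    unfolding j(3) by (rule blockdiag_entry[OF X]) (use i j in auto)
  have b2: "?T $$ (off dL i + a, x) = (if i = j then X i $$ (a, b) else 0)"
    unfolding j(3) by (rule blockdiag_entry[OF X]) (use i j in auto)
  from nz have "j = i \<and> y = off dR i + r"
    unfolding e1 e2 b1 b2 using qd ia by (auto split: if_splits)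
  then have "q = sg k dL dR i b r" unfolding sg_def qd(1) j(3) by simp
  then show "\<exists>j<k. \<exists>b<dL j. \<exists>r'<dR j. q = sg k dL dR j b r'" using i j \<open>j = i \<and> y = off dR i + r\<close> by blast
qed

lemma compat_R:
  assumes Y: "\<And>i. i < k \<Longrightarrow> Y i \<in> carrier_mat (dR i) (dR i)"
  shows "compat k dL dR (kron (1\<^sub>m (off dL k)) (blockdiag k dR Y))"
  unfolding compat_def
proof (intro allI impI)
  fix q i a r
  assume q: "q < off dL k * off dR k" and i: "i < k" "a < dL i" "r < dR i"
    and nz: "kron (1\<^sub>m (off dL k)) (blockdiag k dR Y) $$ (q, sg k dL dR i a r) \<noteq> 0 \<or>
       kron (1\<^sub>m (off dL k)) (blockdiag k dR Y) $$ (sg k dL dR i a r, q) \<noteq> 0"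
  let ?R = "blockdiag k dR Y" and ?DR = "off dR k" and ?DL = "off dL k"
  define x where "x = q div ?DR"
  define y where "y = q mod ?DR"
  have qd: "q = x * ?DR + y" "x < ?DL" "y < ?DR" using q_decomp[OF q] unfolding x_def y_def by auto
  obtain j c where j: "j < k" "c < dR j" "y = off dR j + c" using off_decomp[OF qd(3)] by blast
  have ia: "off dL i + a < ?DL" "off dR i + r < ?DR" using i off_bound by auto
  have R: "?R \<in> carrier_mat ?DR ?DR" by simp
  have e1: "kron (1\<^sub>m ?DL) ?R $$ (q, sg k dL dR i a r) = 1\<^sub>m ?DL $$ (x, off dL i + a) * ?R $$ (y, off dR i + r)"
    unfolding sg_def qd(1) by (rule kron_entry[OF one_carrier_mat R]) (use qd ia in auto)
  have e2: "kron (1\<^sub>m ?DL) ?R $$ (sg k dL dR i a r, q) = 1\<^sub>m ?DL $$ (off dL i + a, x) * ?R $$ (off dR i + r, y)"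
    unfolding sg_def qd(1) by (rule kron_entry[OF one_carrier_mat R]) (use qd ia in auto)
  have b1: "?R $$ (y, off dR i + r) = (if j = i then Y j $$ (c, r) else 0)"
    unfolding j(3) by (rule blockdiag_entry[OF Y]) (use i j in auto)
  have b2: "?R $$ (off dR i + r, y) = (if i = j then Y i $$ (r, c) else 0)"
    unfolding j(3) by (rule blockdiag_entry[OF Y]) (use i j in auto)
  from nz have "j = i \<and> x = off dL i + a"
    unfolding e1 e2 b1 b2 using qd ia by (auto split: if_splits)
  then have "q = sg k dL dR i a c" unfolding sg_def qd(1) j(3) by simp
  then show "\<exists>j<k. \<exists>b<dL j. \<exists>r'<dR j. q = sg k dL dR j b r'" using i j \<open>j = i \<and> x = off dL i + a\<close> by blast
qed

lemma mult_single:
  fixes A B :: "complex mat"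
  assumes "A \<in> carrier_mat m l" "B \<in> carrier_mat l n" "i < m" "j < n" "e < l"
    "\<And>t. t < l \<Longrightarrow> t \<noteq> e \<Longrightarrow> A $$ (i,t) * B $$ (t,j) = 0"
  shows "(A * B) $$ (i,j) = A $$ (i,e) * B $$ (e,j)"
proof -
  have "(A * B) $$ (i,j) = (\<Sum>t\<in>{0..<l}. A $$ (i,t) * B $$ (t,j))"
    using assms by (auto simp: index_mult_mat scalar_prod_def intro!: sum.cong)
  also have "\<dots> = (\<Sum>t\<in>{0..<l}. if t = e then A $$ (i,t) * B $$ (t,j) else 0)"
    by (rule sum.cong) (use assms(6) in auto)
  also have "\<dots> = A $$ (i,e) * B $$ (e,j)" using assms(5) by (subst sum.delta) auto
  finally show ?thesis .
qed

lemma kron_gen_entry: "A \<in> carrier_mat m1 n1 \<Longrightarrow> B \<in> carrier_mat m2 n2 \<Longrightarrow> q < m1 * m2 \<Longrightarrow> q' < n1 * n2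
  \<Longrightarrow> kron A B $$ (q, q') = A $$ (q div m2, q' div n2) * B $$ (q mod m2, q' mod n2)"
  by (simp add: kron_def)

lemma kron_comm:
  assumes T: "T \<in> carrier_mat m1 m1" and R: "R \<in> carrier_mat m2 m2"
  shows "kron T (1\<^sub>m m2) * kron (1\<^sub>m m1) R = kron (1\<^sub>m m1) R * kron T (1\<^sub>m m2)"
proof -
  have K1: "kron T (1\<^sub>m m2) \<in> carrier_mat (m1 * m2) (m1 * m2)" using kron_carrier[of T "1\<^sub>m m2"] T by auto
  have K2: "kron (1\<^sub>m m1) R \<in> carrier_mat (m1 * m2) (m1 * m2)" using kron_carrier[of "1\<^sub>m m1" R] R by auto
  show ?thesis
  proof (rule eq_matI)
  fix q q' assume "q < dim_row (kron (1\<^sub>m m1) R * kron T (1\<^sub>m m2))" "q' < dim_col (kron (1\<^sub>m m1) R * kron T (1\<^sub>m m2))"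
  then have q: "q < m1 * m2" and q': "q' < m1 * m2" using K1 K2 by auto
  have qd: "q = (q div m2) * m2 + q mod m2" "q div m2 < m1" "q mod m2 < m2" using q_decomp[OF q] by auto
  have qd': "q' = (q' div m2) * m2 + q' mod m2" "q' div m2 < m1" "q' mod m2 < m2" using q_decomp[OF q'] by auto
  have e1: "q' div m2 * m2 + q mod m2 < m1 * m2" using ar_bound qd qd' by blast
  have e2: "q div m2 * m2 + q' mod m2 < m1 * m2" using ar_bound qd qd' by blast
  have "(kron T (1\<^sub>m m2) * kron (1\<^sub>m m1) R) $$ (q, q') =
     kron T (1\<^sub>m m2) $$ (q, q' div m2 * m2 + q mod m2) * kron (1\<^sub>m m1) R $$ (q' div m2 * m2 + q mod m2, q')"
  proof (rule mult_single[OF K1 K2 q q' e1])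
    fix t assume t: "t < m1 * m2" "t \<noteq> q' div m2 * m2 + q mod m2"
    have td: "t = (t div m2) * m2 + t mod m2" "t div m2 < m1" "t mod m2 < m2" using q_decomp[OF t(1)] by auto
    then have "t div m2 \<noteq> q' div m2 \<or> t mod m2 \<noteq> q mod m2" using t(2) by metis
    then show "kron T (1\<^sub>m m2) $$ (q, t) * kron (1\<^sub>m m1) R $$ (t, q') = 0"
      using q q' t td qd qd' by (auto simp: kron_gen_entry[OF T one_carrier_mat] kron_gen_entry[OF one_carrier_mat R])
  qed
  also have "\<dots> = T $$ (q div m2, q' div m2) * R $$ (q mod m2, q' mod m2)"
    using q q' e1 qd qd' by (simp add: kron_gen_entry[OF T one_carrier_mat] kron_gen_entry[OF one_carrier_mat R])
  finally have L: "(kron T (1\<^sub>m m2) * kron (1\<^sub>m m1) R) $$ (q, q') = T $$ (q div m2, q' div m2) * R $$ (q mod m2, q' mod m2)" .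
  have "(kron (1\<^sub>m m1) R * kron T (1\<^sub>m m2)) $$ (q, q') =
     kron (1\<^sub>m m1) R $$ (q, q div m2 * m2 + q' mod m2) * kron T (1\<^sub>m m2) $$ (q div m2 * m2 + q' mod m2, q')"
  proof (rule mult_single[OF K2 K1 q q' e2])
    fix t assume t: "t < m1 * m2" "t \<noteq> q div m2 * m2 + q' mod m2"
    have td: "t = (t div m2) * m2 + t mod m2" "t div m2 < m1" "t mod m2 < m2" using q_decomp[OF t(1)] by auto
    then have "t div m2 \<noteq> q div m2 \<or> t mod m2 \<noteq> q' mod m2" using t(2) by metis
    then show "kron (1\<^sub>m m1) R $$ (q, t) * kron T (1\<^sub>m m2) $$ (t, q') = 0"
      using q q' t td qd qd' by (auto simp: kron_gen_entry[OF T one_carrier_mat] kron_gen_entry[OF one_carrier_mat R])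
  qed
  also have "\<dots> = T $$ (q div m2, q' div m2) * R $$ (q mod m2, q' mod m2)"
    using q q' e2 qd qd' by (simp add: kron_gen_entry[OF T one_carrier_mat] kron_gen_entry[OF one_carrier_mat R])
  finally show "(kron T (1\<^sub>m m2) * kron (1\<^sub>m m1) R) $$ (q, q') = (kron (1\<^sub>m m1) R * kron T (1\<^sub>m m2)) $$ (q, q')"
    using L by simp
  qed (use K1 K2 in auto)
qed


lemma commutant_key:
  assumes C: "C \<in> carrier_mat (off (\<lambda>j. dL j * dR j) k) (off (\<lambda>j. dL j * dR j) k)"
    and comm: "\<And>X. (\<forall>i<k. X i \<in> carrier_mat (dL i) (dL i)) \<Longrightarrow>
       C * blockdiag k (\<lambda>j. dL j * dR j) (\<lambda>i. kron (X i) (1\<^sub>m (dR i))) =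
       blockdiag k (\<lambda>j. dL j * dR j) (\<lambda>i. kron (X i) (1\<^sub>m (dR i))) * C"
    and i: "i < k" "a < dL i" "r < dR i" and j: "j < k" "a' < dL j" "r' < dR j" "b < dL j"
  shows "C $$ (idx dL dR i a r, idx dL dR j a' r') =
    (if i = j \<and> a = a' then C $$ (idx dL dR j b r, idx dL dR j b r') else 0)"
proof -
  let ?N = "off (\<lambda>j. dL j * dR j) k"
  define E where "E = (\<lambda>l. mat (dL l) (dL l) (\<lambda>(x,y). if l = j \<and> x = a' \<and> y = b then 1 else (0::complex)))"
  let ?D = "blockdiag k (\<lambda>j. dL j * dR j) (\<lambda>i. kron (E i) (1\<^sub>m (dR i)))"
  have Ec: "\<And>l. l < k \<Longrightarrow> E l \<in> carrier_mat (dL l) (dL l)" by (simp add: E_def)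
  have D: "?D \<in> carrier_mat ?N ?N" by simp
  have Dent: "?D $$ (idx dL dR l x s, idx dL dR l' y s') = (if l = l' \<and> l = j \<and> x = a' \<and> y = b \<and> s = s' then 1 else 0)"
    if "l < k" "x < dL l" "s < dR l" "l' < k" "y < dL l'" "s' < dR l'" for l x s l' y s'
    using blockdiag_kron_entry[of k E dL "\<lambda>i. 1\<^sub>m (dR i)" dR, OF Ec one_carrier_mat that(1) that(4) that(2) that(3) that(5) that(6)] that
    by (auto simp: E_def)
  have pi: "idx dL dR i a r < ?N" using idx_bound[where k=k and dL=dL and dR=dR, OF i] .
  have pj: "idx dL dR j b r' < ?N" "idx dL dR j a' r' < ?N"
    using idx_bound[where k=k and dL=dL and dR=dR, OF j(1) j(4) j(3)] idx_bound[where k=k and dL=dL and dR=dR, OF j(1) j(2) j(3)]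
    by auto
  have CD: "(C * ?D) $$ (idx dL dR i a r, idx dL dR j b r') = C $$ (idx dL dR i a r, idx dL dR j a' r')"
  proof (rule mult_col_delta[OF C D pi pj(1) pj(2)])
    fix t assume t: "t < ?N"
    obtain l x s where l: "l < k" "x < dL l" "s < dR l" and tl: "t = idx dL dR l x s" using idx_decomp[OF t] by blast
    show "?D $$ (t, idx dL dR j b r') = (if t = idx dL dR j a' r' then 1 else 0)"
      unfolding tl Dent[OF l j(1) j(4) j(3)] using idx_uniq[of dL dR l x s j a' r'] l j by auto
  qed
  have DC: "(?D * C) $$ (idx dL dR i a r, idx dL dR j b r') =
    (if i = j \<and> a = a' then C $$ (idx dL dR j b r, idx dL dR j b r') else 0)"
  proof (cases "i = j \<and> a = a'")
    case True
    have pj3: "idx dL dR j b r < ?N" using idx_bound[where k=k and dL=dL and dR=dR, OF j(1) j(4)] i True by auto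
    have "(?D * C) $$ (idx dL dR i a r, idx dL dR j b r') = C $$ (idx dL dR j b r, idx dL dR j b r')"
    proof (rule mult_row_delta[OF D C pi pj(1) pj3])
      fix t assume t: "t < ?N"
      obtain l x s where l: "l < k" "x < dL l" "s < dR l" and tl: "t = idx dL dR l x s" using idx_decomp[OF t] by blast
      show "?D $$ (idx dL dR i a r, t) = (if t = idx dL dR j b r then 1 else 0)"
        unfolding tl Dent[OF i l] using idx_uniq[of dL dR l x s j b r] l j i True by auto
    qed
    then show ?thesis using True by simp
  next
    case False
    have "(?D * C) $$ (idx dL dR i a r, idx dL dR j b r') = 0"
    proof (rule mult_row_zero[OF D C pi pj(1)])
      fix t assume t: "t < ?N"
      obtain l x s where l: "l < k" "x < dL l" "s < dR l" and tl: "t = idx dL dR l x s" using idx_decomp[OF t] by blast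
      show "?D $$ (idx dL dR i a r, t) = 0"
        unfolding tl Dent[OF i l] using False by auto
    qed
    then show ?thesis using False by auto
  qed
  have "C * ?D = ?D * C" by (rule comm) (use Ec in auto)
  then show ?thesis using CD DC by simp
qed

lemma commutant_block:
  assumes C: "C \<in> carrier_mat (off (\<lambda>j. dL j * dR j) k) (off (\<lambda>j. dL j * dR j) k)"
    and comm: "\<And>X. (\<forall>i<k. X i \<in> carrier_mat (dL i) (dL i)) \<Longrightarrow>
       C * blockdiag k (\<lambda>j. dL j * dR j) (\<lambda>i. kron (X i) (1\<^sub>m (dR i))) =
       blockdiag k (\<lambda>j. dL j * dR j) (\<lambda>i. kron (X i) (1\<^sub>m (dR i))) * C"
  shows "C = blockdiag k (\<lambda>j. dL j * dR j)
     (\<lambda>i. kron (1\<^sub>m (dL i)) (mat (dR i) (dR i) (\<lambda>(r,r'). C $$ (idx dL dR i 0 r, idx dL dR i 0 r'))))"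
    (is "C = ?B")
proof (rule eq_matI)
  let ?N = "off (\<lambda>j. dL j * dR j) k"
  fix p p' assume "p < dim_row ?B" "p' < dim_col ?B"
  then have p: "p < ?N" and p': "p' < ?N" by simp_all
  obtain i a r where i: "i < k" "a < dL i" "r < dR i" and pi: "p = idx dL dR i a r"
    using idx_decomp[OF p] by blast
  obtain j b r' where j: "j < k" "b < dL j" "r' < dR j" and pj: "p' = idx dL dR j b r'"
    using idx_decomp[OF p'] by blast
  have j0: "0 < dL j" using j by simp
  have e: "?B $$ (idx dL dR i a r, idx dL dR j b r') =
     (if i = j then 1\<^sub>m (dL i) $$ (a, b) * mat (dR i) (dR i) (\<lambda>(r,r'). C $$ (idx dL dR i 0 r, idx dL dR i 0 r')) $$ (r, r') else 0)"
    by (rule blockdiag_kron_entry) (use i j in auto)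
  have K: "C $$ (idx dL dR i a r, idx dL dR j b r') =
    (if i = j \<and> a = b then C $$ (idx dL dR j 0 r, idx dL dR j 0 r') else 0)"
    by (rule commutant_key[OF C comm i j(1,2,3) j0])
  show "C $$ (p, p') = ?B $$ (p, p')"
    unfolding pi pj e K using i j by (cases "i = j") auto
qed (use C in auto)


lemma blockdiag_cong: "(\<And>i. i < k \<Longrightarrow> Z i = Z' i) \<Longrightarrow> blockdiag k d Z = blockdiag k d Z'"
  unfolding blockdiag_def msum_def Let_def by (auto intro!: cong_mat sum.cong)

lemma stloc_sub_loc:
  assumes A: "A \<in> carrier_mat n n" and X: "X \<in> carrier_mat M n" and XX: "adj X * X = 1\<^sub>m n"
    and K: "K \<in> carrier_mat M M" and h: "A * adj X = adj X * K"
  shows "A = adj X * K * X"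
proof -
  have "A = A * (adj X * X)" using A XX by simp
  also have "\<dots> = (A * adj X) * X" using assoc_mult_mat[OF A adj_carrier[OF X] X] by simp
  also have "\<dots> = adj X * K * X" using h by simp
  finally show ?thesis .
qed

lemma stloc_from:
  assumes Uc: "U \<in> carrier_mat N n" and UU: "adj U * U = 1\<^sub>m n" and UU': "U * adj U = 1\<^sub>m N"
    and Sc: "S \<in> carrier_mat M N" and Kc: "K \<in> carrier_mat M M" and Ac: "A \<in> carrier_mat n n"
    and hB: "U * A * adj U = adj S * K * S"
    and hr: "K * S = S * (adj S * K * S)" and hl: "adj S * K = (adj S * K * S) * adj S"
  shows "A * adj (S * U) = adj (S * U) * K \<and> (S * U) * A = K * (S * U)"
proof -
  define B where "B = adj S * K * S"
  have Bc: "B \<in> carrier_mat N N" unfolding B_def using Sc Kc by (metis adj_carrier mult_carrier_mat)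
  have aU: "adj U \<in> carrier_mat n N" using Uc by simp
  have aS: "adj S \<in> carrier_mat N M" using Sc by simp
  have UA: "U * A = B * U"
  proof -
    have "B * U = U * A * adj U * U" using hB B_def by simp
    also have "\<dots> = U * A * (adj U * U)" using assoc_mult_mat[OF mult_carrier_mat[OF Uc Ac] aU Uc] by simp
    also have "\<dots> = U * A" using UU Uc Ac by simp
    finally show ?thesis by simp
  qed
  have AU: "A * adj U = adj U * B"
  proof -
    have "adj U * B = adj U * (U * A * adj U)" using hB B_def by simp
    also have "\<dots> = adj U * (U * A) * adj U" using assoc_mult_mat[OF aU mult_carrier_mat[OF Uc Ac] aU] by simp
    also have "\<dots> = (adj U * U) * A * adj U" using assoc_mult_mat[OF aU Uc Ac] by simp
    also have "\<dots> = A * adj U" using UU Ac by simp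
    finally show ?thesis by simp
  qed
  have "A * adj (S * U) = A * (adj U * adj S)" using adj_mult[OF Sc Uc] by simp
  also have "\<dots> = (A * adj U) * adj S" using assoc_mult_mat[OF Ac aU aS] by simp
  also have "\<dots> = adj U * B * adj S" using AU by simp
  also have "\<dots> = adj U * (B * adj S)" using assoc_mult_mat[OF aU Bc aS] by simp
  also have "\<dots> = adj U * (adj S * K)" using hl B_def by simp
  also have "\<dots> = adj U * adj S * K" using assoc_mult_mat[OF aU aS Kc] by simp
  also have "\<dots> = adj (S * U) * K" using adj_mult[OF Sc Uc] by simp
  finally have L: "A * adj (S * U) = adj (S * U) * K" .
  have "(S * U) * A = S * (U * A)" using assoc_mult_mat[OF Sc Uc Ac] by simp
  also have "\<dots> = S * (B * U)" using UA by simp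
  also have "\<dots> = (S * B) * U" using assoc_mult_mat[OF Sc Bc Uc] by simp
  also have "\<dots> = (K * S) * U" using hr B_def by simp
  also have "\<dots> = K * (S * U)" using assoc_mult_mat[OF Kc Sc Uc] by simp
  finally show ?thesis using L by simp
qed


lemma conj_mult:
  assumes Uc: "U \<in> carrier_mat N n" and UU: "adj U * U = 1\<^sub>m n" and P: "P \<in> carrier_mat n n" and Q: "Q \<in> carrier_mat n n"
  shows "(U * P * adj U) * (U * Q * adj U) = U * (P * Q) * adj U"
proof -
  have aU: "adj U \<in> carrier_mat n N" using Uc by simp
  have UP: "U * P \<in> carrier_mat N n" using Uc P by simp
  have UQ: "U * Q \<in> carrier_mat N n" using Uc Q by simp
  have "adj U * (U * Q * adj U) = adj U * (U * Q) * adj U" using assoc_mult_mat[OF aU UQ aU] by simp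
  also have "\<dots> = (adj U * U) * Q * adj U" using assoc_mult_mat[OF aU Uc Q] by simp
  also have "\<dots> = Q * adj U" using UU Q by simp
  finally have e: "adj U * (U * Q * adj U) = Q * adj U" .
  have "(U * P * adj U) * (U * Q * adj U) = U * P * (adj U * (U * Q * adj U))"
    using assoc_mult_mat[OF UP aU mult_carrier_mat[OF UQ aU]] by simp
  also have "\<dots> = U * P * (Q * adj U)" using e by simp
  also have "\<dots> = U * P * Q * adj U" using assoc_mult_mat[OF UP Q aU] by simp
  also have "\<dots> = U * (P * Q) * adj U" using assoc_mult_mat[OF Uc P Q] by simp
  finally show ?thesis .
qed

theorem mainTheorem10:
  fixes n k :: nat and dL dR :: "nat \<Rightarrow> nat" and \<A> :: "complex mat set" and U :: "complex mat"
  assumes "vN_algebra n \<A>"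
    and "rep_unitary n \<A> k dL dR U"
  shows "let nL = (\<Sum>i<k. dL i); nR = (\<Sum>i<k. dR i); \<chi> = chi_U k dL dR U in
     splitting_map n nL nR \<chi> \<and>
     stloc_L n nL nR \<chi> = \<A> \<and> loc_L n nL nR \<chi> = \<A> \<and>
     stloc_R n nL nR \<chi> = commutant n \<A> \<and> loc_R n nL nR \<chi> = commutant n \<A>"
proof -
  define d where "d = (\<lambda>j. dL j * dR j)"
  define N where "N = off d k"
  define DL where "DL = off dL k"
  define DR where "DR = off dR k"
  define S where "S = split_incl k dL dR"
  define BD where "BD = (\<lambda>X. blockdiag k d (\<lambda>i. kron (X i) (1\<^sub>m (dR i))))"
  have sumL: "(\<Sum>i<k. dL i) = DL" and sumR: "(\<Sum>i<k. dR i) = DR" and sumN: "(\<Sum>i<k. dL i * dR i) = N"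
    by (simp_all add: DL_def DR_def N_def d_def off_def)
  have chi: "chi_U k dL dR U = S * U" by (simp add: chi_U_def S_def)
  have Acar: "\<A> \<subseteq> carrier_mat n n" using assms(1) by (simp add: vN_algebra_def)
  have Uc: "U \<in> carrier_mat N n" and UU: "adj U * U = 1\<^sub>m n" and UU': "U * adj U = 1\<^sub>m N"
    and img: "(\<lambda>A. U * A * adj U) ` \<A> = {BD T | T. \<forall>i<k. T i \<in> carrier_mat (dL i) (dL i)}"
    using assms(2) unfolding rep_unitary_def Let_def sumN BD_def d_def by auto
  have Sc: "S \<in> carrier_mat (DL * DR) N" unfolding S_def DL_def DR_def N_def d_def by (rule S_carrier)
  have SS': "adj S * S = 1\<^sub>m N" unfolding S_def N_def d_def by (rule SS)
  have aU: "adj U \<in> carrier_mat n N" using Uc by simp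
  have aS: "adj S \<in> carrier_mat N (DL * DR)" using Sc by simp
  have chic: "S * U \<in> carrier_mat (DL * DR) n" using Sc Uc by simp
  have chiiso: "adj (S * U) * (S * U) = 1\<^sub>m n"
  proof -
    have "adj (S * U) * (S * U) = adj U * adj S * (S * U)" using adj_mult[OF Sc Uc] by simp
    also have "\<dots> = adj U * (adj S * (S * U))" using assoc_mult_mat[OF aU aS chic] by simp
    also have "\<dots> = adj U * ((adj S * S) * U)" using assoc_mult_mat[OF aS Sc Uc] by simp
    also have "\<dots> = 1\<^sub>m n" using SS' UU Uc by simp
    finally show ?thesis .
  qed
  have loc_eq: "adj (S * U) * K * (S * U) = adj U * (adj S * K * S) * U" if K: "K \<in> carrier_mat (DL * DR) (DL * DR)" for K
  proof -
    have "adj (S * U) * K * (S * U) = adj U * adj S * K * (S * U)" using adj_mult[OF Sc Uc] by simp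
    also have "\<dots> = adj U * (adj S * K) * (S * U)" using assoc_mult_mat[OF aU aS K] by simp
    also have "\<dots> = adj U * (adj S * K) * S * U"
      using assoc_mult_mat[OF mult_carrier_mat[OF aU mult_carrier_mat[OF aS K]] Sc Uc] by simp
    also have "\<dots> = adj U * (adj S * K * S) * U"
      using assoc_mult_mat[OF aU mult_carrier_mat[OF aS K] Sc] by simp
    finally show ?thesis .
  qed
  have back_eq: "adj U * (U * A * adj U) * U = A" if A: "A \<in> carrier_mat n n" for A
  proof -
    have "adj U * (U * A * adj U) * U = adj U * (U * A) * adj U * U"
      using assoc_mult_mat[OF aU mult_carrier_mat[OF Uc A] aU] by simp
    also have "\<dots> = (adj U * U) * A * adj U * U" using assoc_mult_mat[OF aU Uc A] by simp
    also have "\<dots> = A * (adj U * U)" using assoc_mult_mat[OF A aU Uc] UU A by simp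
    also have "\<dots> = A" using UU A by simp
    finally show ?thesis .
  qed
  have A_st: "\<exists>T \<in> carrier_mat DL DL. A * adj (S * U) = adj (S * U) * kron T (1\<^sub>m DR) \<and>
      (S * U) * A = kron T (1\<^sub>m DR) * (S * U)" if A: "A \<in> \<A>" for A
  proof -
    have "U * A * adj U \<in> {BD T | T. \<forall>i<k. T i \<in> carrier_mat (dL i) (dL i)}" using img A by blast
    then obtain X where X: "\<And>i. i < k \<Longrightarrow> X i \<in> carrier_mat (dL i) (dL i)" and hX: "U * A * adj U = BD X" by blast
    define T where "T = blockdiag k dL X"
    define K where "K = kron T (1\<^sub>m DR)"
    have Tc: "T \<in> carrier_mat DL DL" unfolding T_def DL_def by simp
    have Kc: "K \<in> carrier_mat (DL * DR) (DL * DR)" unfolding K_def using kron_carrier[of T "1\<^sub>m DR"] Tc by simp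
    have SKS: "adj S * K * S = BD X"
      unfolding S_def K_def T_def DR_def BD_def d_def
      by (subst SKS_L) (auto simp: DL_def intro!: blockdiag_cong simp: sub_blockdiag[OF X])
    have cp: "compat k dL dR K" unfolding K_def T_def DR_def by (rule compat_L[OF X])
    have hr: "K * S = S * (adj S * K * S)" unfolding S_def
      by (rule comm_right[OF _ cp]) (use Kc in \<open>simp add: DL_def DR_def\<close>)
    have hl: "adj S * K = (adj S * K * S) * adj S" unfolding S_def
      by (rule comm_left[OF _ cp]) (use Kc in \<open>simp add: DL_def DR_def\<close>)
    have "A * adj (S * U) = adj (S * U) * K \<and> (S * U) * A = K * (S * U)"
      by (rule stloc_from[OF Uc UU UU' Sc Kc]) (use A Acar hX SKS hr hl in auto)
    then show ?thesis using Tc unfolding K_def by blast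
  qed
  have A_sub_st: "\<A> \<subseteq> stloc_L n DL DR (S * U)"
    unfolding stloc_L_def using A_st Acar by blast
  have st_sub_loc: "stloc_L n DL DR (S * U) \<subseteq> loc_L n DL DR (S * U)"
  proof
    fix A assume "A \<in> stloc_L n DL DR (S * U)"
    then obtain T where A: "A \<in> carrier_mat n n" and T: "T \<in> carrier_mat DL DL"
      and h: "A * adj (S * U) = adj (S * U) * kron T (1\<^sub>m DR)" unfolding stloc_L_def by blast
    have "A = adj (S * U) * kron T (1\<^sub>m DR) * (S * U)"
      by (rule stloc_sub_loc[OF A chic chiiso _ h]) (use kron_carrier[of T "1\<^sub>m DR"] T in simp)
    then show "A \<in> loc_L n DL DR (S * U)" unfolding loc_L_def using A T by blast
  qed
  have loc_sub_A: "loc_L n DL DR (S * U) \<subseteq> \<A>"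
  proof
    fix A assume "A \<in> loc_L n DL DR (S * U)"
    then obtain T where A: "A \<in> carrier_mat n n" and T: "T \<in> carrier_mat DL DL"
      and h: "A = adj (S * U) * kron T (1\<^sub>m DR) * (S * U)" unfolding loc_L_def by blast
    have Kc: "kron T (1\<^sub>m DR) \<in> carrier_mat (DL * DR) (DL * DR)" using kron_carrier[of T "1\<^sub>m DR"] T by simp
    have "adj S * kron T (1\<^sub>m DR) * S = BD (sub_blk dL T)"
      unfolding S_def DR_def BD_def d_def by (rule SKS_L) (use T in \<open>simp add: DL_def\<close>)
    moreover have "BD (sub_blk dL T) \<in> (\<lambda>A. U * A * adj U) ` \<A>" unfolding img by auto
    ultimately obtain A' where A': "A' \<in> \<A>" "U * A' * adj U = adj S * kron T (1\<^sub>m DR) * S" by auto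
    have "A = adj U * (U * A' * adj U) * U" unfolding h A'(2) loc_eq[OF Kc] ..
    also have "\<dots> = A'" by (rule back_eq) (use A' Acar in auto)
    finally show "A \<in> \<A>" using A' by simp
  qed
  have locR_sub: "loc_R n DL DR (S * U) \<subseteq> commutant n \<A>"
  proof
    fix A assume "A \<in> loc_R n DL DR (S * U)"
    then obtain R where A: "A \<in> carrier_mat n n" and R: "R \<in> carrier_mat DR DR"
      and h: "A = adj (S * U) * kron (1\<^sub>m DL) R * (S * U)" unfolding loc_R_def by blast
    have KR: "kron (1\<^sub>m DL) R \<in> carrier_mat (DL * DR) (DL * DR)" using kron_carrier[of "1\<^sub>m DL" R] R by simp
    have "X * A = A * X" if X: "X \<in> \<A>" for X
    proof -
      obtain T where T: "T \<in> carrier_mat DL DL" and h1: "X * adj (S * U) = adj (S * U) * kron T (1\<^sub>m DR)"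
        and h2: "(S * U) * X = kron T (1\<^sub>m DR) * (S * U)" using A_st[OF X] by blast
      have KT: "kron T (1\<^sub>m DR) \<in> carrier_mat (DL * DR) (DL * DR)" using kron_carrier[of T "1\<^sub>m DR"] T by simp
      have Xc: "X \<in> carrier_mat n n" using X Acar by auto
      have ac: "adj (S * U) \<in> carrier_mat n (DL * DR)" using chic by simp
      have "X * A = X * adj (S * U) * kron (1\<^sub>m DL) R * (S * U)"
        unfolding h using assoc_mult_mat[OF Xc mult_carrier_mat[OF ac KR] chic] assoc_mult_mat[OF Xc ac KR] by simp
      also have "\<dots> = adj (S * U) * (kron T (1\<^sub>m DR) * kron (1\<^sub>m DL) R) * (S * U)"
        unfolding h1 using assoc_mult_mat[OF ac KT KR] by simp
      also have "\<dots> = adj (S * U) * (kron (1\<^sub>m DL) R * kron T (1\<^sub>m DR)) * (S * U)"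
        using kron_comm[OF T R] by simp
      also have "\<dots> = adj (S * U) * kron (1\<^sub>m DL) R * (kron T (1\<^sub>m DR) * (S * U))"
        using assoc_mult_mat[OF ac KR KT] assoc_mult_mat[OF mult_carrier_mat[OF ac KR] KT chic] by simp
      also have "\<dots> = A * X" unfolding h h2[symmetric]
        using assoc_mult_mat[OF mult_carrier_mat[OF ac KR] chic Xc] by simp
      finally show ?thesis .
    qed
    then show "A \<in> commutant n \<A>" unfolding commutant_def using A by auto
  qed
  have comm_sub: "commutant n \<A> \<subseteq> stloc_R n DL DR (S * U)"
  proof
    fix B assume "B \<in> commutant n \<A>"
    then have B: "B \<in> carrier_mat n n" and cB: "\<And>A. A \<in> \<A> \<Longrightarrow> A * B = B * A" unfolding commutant_def by auto
    define C where "C = U * B * adj U"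
    have Cc: "C \<in> carrier_mat N N" unfolding C_def using mult_carrier_mat[OF mult_carrier_mat[OF Uc B] aU] .
    have cC: "C * BD X = BD X * C" if X: "\<forall>i<k. X i \<in> carrier_mat (dL i) (dL i)" for X
    proof -
      have "BD X \<in> (\<lambda>A. U * A * adj U) ` \<A>" unfolding img using X by auto
      then obtain A where A: "A \<in> \<A>" and hA: "BD X = U * A * adj U" by auto
      have Ac: "A \<in> carrier_mat n n" using A Acar by auto
      have "C * BD X = U * (B * A) * adj U" unfolding C_def hA by (rule conj_mult[OF Uc UU B Ac])
      also have "\<dots> = U * (A * B) * adj U" using cB[OF A] by simp
      also have "\<dots> = BD X * C" unfolding C_def hA by (rule conj_mult[OF Uc UU Ac B, symmetric])
      finally show ?thesis .
    qed
    define Y where "Y = (\<lambda>i. mat (dR i) (dR i) (\<lambda>(r,r'). C $$ (idx dL dR i 0 r, idx dL dR i 0 r')))"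
    have Yc: "\<And>i. i < k \<Longrightarrow> Y i \<in> carrier_mat (dR i) (dR i)" by (simp add: Y_def)
    have CY: "C = blockdiag k d (\<lambda>i. kron (1\<^sub>m (dL i)) (Y i))"
      unfolding Y_def d_def
      by (rule commutant_block) (use Cc cC in \<open>auto simp: N_def d_def BD_def\<close>)
    define R where "R = blockdiag k dR Y"
    define K where "K = kron (1\<^sub>m DL) R"
    have Rc: "R \<in> carrier_mat DR DR" unfolding R_def DR_def by simp
    have Kc: "K \<in> carrier_mat (DL * DR) (DL * DR)" unfolding K_def using kron_carrier[of "1\<^sub>m DL" R] Rc by simp
    have SKS: "adj S * K * S = C"
      unfolding S_def K_def R_def DL_def CY d_def
      by (subst SKS_R) (auto simp: DR_def intro!: blockdiag_cong simp: sub_blockdiag[OF Yc])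
    have cp: "compat k dL dR K" unfolding K_def R_def DL_def by (rule compat_R[OF Yc])
    have hr: "K * S = S * (adj S * K * S)" unfolding S_def
      by (rule comm_right[OF _ cp]) (use Kc in \<open>simp add: DL_def DR_def\<close>)
    have hl: "adj S * K = (adj S * K * S) * adj S" unfolding S_def
      by (rule comm_left[OF _ cp]) (use Kc in \<open>simp add: DL_def DR_def\<close>)
    have "B * adj (S * U) = adj (S * U) * K \<and> (S * U) * B = K * (S * U)"
      by (rule stloc_from[OF Uc UU UU' Sc Kc B]) (use SKS C_def hr hl in auto)
    then show "B \<in> stloc_R n DL DR (S * U)" unfolding stloc_R_def K_def using B Rc by blast
  qed
  have stR_sub: "stloc_R n DL DR (S * U) \<subseteq> loc_R n DL DR (S * U)"
  proof
    fix A assume "A \<in> stloc_R n DL DR (S * U)"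
    then obtain R where A: "A \<in> carrier_mat n n" and R: "R \<in> carrier_mat DR DR"
      and h: "A * adj (S * U) = adj (S * U) * kron (1\<^sub>m DL) R" unfolding stloc_R_def by blast
    have "A = adj (S * U) * kron (1\<^sub>m DL) R * (S * U)"
      by (rule stloc_sub_loc[OF A chic chiiso _ h]) (use kron_carrier[of "1\<^sub>m DL" R] R in simp)
    then show "A \<in> loc_R n DL DR (S * U)" unfolding loc_R_def using A R by blast
  qed
  have spl: "splitting_map n DL DR (S * U)" unfolding splitting_map_def using chic chiiso by simp
  show ?thesis unfolding Let_def sumL sumR chi
    using spl A_sub_st st_sub_loc loc_sub_A locR_sub comm_sub stR_sub by blast
qed

end
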